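(* Let $\alpha=\alpha^m:[m]\to\mathbb N$ be a positional satisfaction function with $\alpha(1)\ge\alpha(2)\ge\dots\ge\alpha(m)$. Then for every instance of $\alpha$-SU-Monroe (with $K\le m$), Algorithm GM outputs a Monroe $K$-assignment $\Phi$ with $\ell_1^\alpha(\Phi)\ge(1-\frac1e)\cdot\mathrm{OPT}$, where $\mathrm{OPT}$ is the maximum of $\ell_1^\alpha$ over all Monroe $K$-assignments.
   Context: Agents $N=[n]$, alternatives $A=\{a_1,\dots,a_m\}$; each agent $i$ has a strict linear order on $A$, $\mathrm{pos}_i(a)$ the position of $a$ ($1$ = best). $\ell_1^\alpha(\Phi)=\sum_{i}\alpha(\mathrm{pos}_i(\Phi(i)))$, where an agent left unassigned (assigned the null alternative $\bot$) is treated as having $\mathrm{pos}_i(\bot)=m$. A Monroe $K$-assignment is $\Phi:N\to A$ with $|\Phi(N)|\le K$ and $|\Phi^{-1}(a)|\le\lceil n/K\rceil$ for all $a$. For $S\subseteq A$ with $|S|\le K$, $\Phi^S_\alpha$ is a partial assignment (each agent mapped to an element of $S$ or to $\bot$) with each $a\in S$ receiving at most $\lceil n/K\rceil$ agents, maximizing $\ell_1^\alpha$ among such partial assignments. Algorithm GM: set $S=\emptyset$; for $K$ iterations, choose $a\in A\setminus S$ maximizing $\ell_1^\alpha(\Phi^{S\cup\{a\}}_\alpha)$ and add it to $S$; output $\Phi^S_\alpha$. *)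

theory Defs
  imports Complex_Main
begin

text \<open>The preference of agent i is
given by its position function pos i, a bijection from A onto {1..m} (1 = best).
A partial assignment maps agents to 'a option, None being the null alternative.\<close>

definition capacity :: "nat \<Rightarrow> nat \<Rightarrow> nat" where
  "capacity n K = nat \<lceil>real n / real K\<rceil>"

definition valid_profile :: "'v set \<Rightarrow> 'a set \<Rightarrow> ('v \<Rightarrow> 'a \<Rightarrow> nat) \<Rightarrow> bool" where
  "valid_profile N A pos \<longleftrightarrow> finite N \<and> finite A \<and>
     (\<forall>i\<in>N. bij_betw (pos i) A {1..card A})"

definition sat :: "(nat \<Rightarrow> nat) \<Rightarrow> nat \<Rightarrow> ('v \<Rightarrow> 'a \<Rightarrow> nat) \<Rightarrow> 'v \<Rightarrow> 'a option \<Rightarrow> nat" where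
  "sat \<alpha> m pos i x = (case x of None \<Rightarrow> \<alpha> m | Some a \<Rightarrow> \<alpha> (pos i a))"

definition ell1 :: "'v set \<Rightarrow> (nat \<Rightarrow> nat) \<Rightarrow> nat \<Rightarrow> ('v \<Rightarrow> 'a \<Rightarrow> nat) \<Rightarrow> ('v \<Rightarrow> 'a option) \<Rightarrow> nat" where
  "ell1 N \<alpha> m pos \<Phi> = (\<Sum>i\<in>N. sat \<alpha> m pos i (\<Phi> i))"

definition monroe_assignment :: "'v set \<Rightarrow> 'a set \<Rightarrow> nat \<Rightarrow> ('v \<Rightarrow> 'a) \<Rightarrow> bool" where
  "monroe_assignment N A K \<Phi> \<longleftrightarrow> (\<forall>i\<in>N. \<Phi> i \<in> A) \<and> card (\<Phi> ` N) \<le> K \<and>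
     (\<forall>a\<in>A. card {i\<in>N. \<Phi> i = a} \<le> capacity (card N) K)"

definition partial_assignment :: "'v set \<Rightarrow> 'a set \<Rightarrow> nat \<Rightarrow> ('v \<Rightarrow> 'a option) \<Rightarrow> bool" where
  "partial_assignment N S K \<Phi> \<longleftrightarrow> (\<forall>i\<in>N. \<Phi> i = None \<or> (\<exists>a\<in>S. \<Phi> i = Some a)) \<and>
     (\<forall>a\<in>S. card {i\<in>N. \<Phi> i = Some a} \<le> capacity (card N) K)"

definition optimal_partial :: "'v set \<Rightarrow> 'a set \<Rightarrow> ('v \<Rightarrow> 'a \<Rightarrow> nat) \<Rightarrow> (nat \<Rightarrow> nat) \<Rightarrow> nat
    \<Rightarrow> 'a set \<Rightarrow> ('v \<Rightarrow> 'a option) \<Rightarrow> bool" where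
  "optimal_partial N A pos \<alpha> K S \<Phi> \<longleftrightarrow> partial_assignment N S K \<Phi> \<and>
     (\<forall>\<Psi>. partial_assignment N S K \<Psi> \<longrightarrow>
        ell1 N \<alpha> (card A) pos \<Psi> \<le> ell1 N \<alpha> (card A) pos \<Phi>)"

definition greedy_choice :: "'v set \<Rightarrow> 'a set \<Rightarrow> ('v \<Rightarrow> 'a \<Rightarrow> nat) \<Rightarrow> (nat \<Rightarrow> nat) \<Rightarrow> nat
    \<Rightarrow> 'a set \<Rightarrow> 'a \<Rightarrow> bool" where
  "greedy_choice N A pos \<alpha> K S a \<longleftrightarrow> a \<in> A - S \<and>
     (\<exists>\<Phi>. optimal_partial N A pos \<alpha> K (S \<union> {a}) \<Phi> \<and>
        (\<forall>b\<in>A - S. \<forall>\<Psi>. partial_assignment N (S \<union> {b}) K \<Psi> \<longrightarrow>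
            ell1 N \<alpha> (card A) pos \<Psi> \<le> ell1 N \<alpha> (card A) pos \<Phi>))"

text \<open>A run of algorithm GM (with arbitrary tie-breaking) that chooses alternatives xs
(in this order) and outputs Phi.\<close>
definition gm_run :: "'v set \<Rightarrow> 'a set \<Rightarrow> ('v \<Rightarrow> 'a \<Rightarrow> nat) \<Rightarrow> (nat \<Rightarrow> nat) \<Rightarrow> nat
    \<Rightarrow> 'a list \<Rightarrow> ('v \<Rightarrow> 'a option) \<Rightarrow> bool" where
  "gm_run N A pos \<alpha> K xs \<Phi> \<longleftrightarrow> length xs = K \<and>
     (\<forall>j<K. greedy_choice N A pos \<alpha> K (set (take j xs)) (xs ! j)) \<and>
     optimal_partial N A pos \<alpha> K (set xs) \<Phi>"

end

theory Submission
  imports Defs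
begin


definition cnt :: "'v set \<Rightarrow> ('v \<Rightarrow> 'a option) \<Rightarrow> 'a \<Rightarrow> nat" where
  "cnt D f x = card {i\<in>D. f i = Some x}"

lemma cnt_split:
  assumes "finite D" "e \<in> D"
  shows "cnt D f x = cnt (D - {e}) f x + (if f e = Some x then 1 else 0)"
proof (cases "f e = Some x")
  case True
  have "{i\<in>D. f i = Some x} = insert e {i\<in>D-{e}. f i = Some x}" using assms(2) True by auto
  then show ?thesis using assms(1) True unfolding cnt_def by simp
next
  case False
  have "{i\<in>D. f i = Some x} = {i\<in>D-{e}. f i = Some x}" using assms(2) False by auto
  then show ?thesis using False unfolding cnt_def by simp
qed

lemma cnt_insert:
  assumes "finite P" "e \<notin> P"
  shows "cnt (insert e P) f x = cnt P f x + (if f e = Some x then 1 else 0)"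
  using cnt_split[of "insert e P" e f x] assms by simp

lemma cnt_cong: "(\<And>i. i\<in>D \<Longrightarrow> f i = g i) \<Longrightarrow> cnt D f x = cnt D g x"
  unfolding cnt_def by (intro arg_cong[where f=card]) auto

lemma decomp:
  assumes "finite D" "\<forall>i\<in>D. \<phi> i \<noteq> Some b"
  shows "\<exists>P\<subseteq>D. (\<forall>i\<in>D. \<psi> i = Some b \<longrightarrow> i \<in> P) \<and>
    (\<forall>x. x \<noteq> b \<longrightarrow> cnt P \<psi> x \<le> cnt P \<phi> x \<and> cnt P \<phi> x \<le> cnt P \<psi> x + (cnt D \<phi> x - cnt D \<psi> x))"
  using assms
proof (induction "card D" arbitrary: D \<psi> rule: less_induct)
  case less
  show ?case
  proof (cases "\<exists>e\<in>D. \<psi> e = Some b")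
    case False
    then show ?thesis by (intro exI[of _ "{}"]) (auto simp: cnt_def)
  next
    case True
    then obtain e where e: "e \<in> D" "\<psi> e = Some b" by blast
    define D' where "D' = D - {e}"
    have fD': "finite D'" and cD': "card D' < card D"
      using less.prems e unfolding D'_def by (auto intro!: diff_less simp: card_gt_0_iff)
    have phiD': "\<forall>i\<in>D'. \<phi> i \<noteq> Some b" using less.prems unfolding D'_def by auto
    have splitD: "\<And>f x. cnt D f x = cnt D' f x + (if f e = Some x then 1 else 0)"
      unfolding D'_def using cnt_split[OF less.prems(1) e(1)] .
    show ?thesis
    proof (cases "\<phi> e")
      case None
      obtain P' where P': "P' \<subseteq> D'" "\<forall>i\<in>D'. \<psi> i = Some b \<longrightarrow> i \<in> P'"
        "\<forall>x. x \<noteq> b \<longrightarrow> cnt P' \<psi> x \<le> cnt P' \<phi> x \<and> cnt P' \<phi> x \<le> cnt P' \<psi> x + (cnt D' \<phi> x - cnt D' \<psi> x)"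
        using less.hyps[of D' \<psi>] cD' fD' phiD' by blast
      define P where "P = insert e P'"
      have eP': "e \<notin> P'" using P'(1) unfolding D'_def by auto
      have fP': "finite P'" using P'(1) fD' finite_subset by blast
      have splitP: "\<And>f x. cnt P f x = cnt P' f x + (if f e = Some x then 1 else 0)"
        unfolding P_def by (rule cnt_insert[OF fP' eP'])
      show ?thesis
      proof (intro exI[of _ P] conjI allI impI)
        show "P \<subseteq> D" using P'(1) e(1) unfolding P_def D'_def by auto
        show "\<forall>i\<in>D. \<psi> i = Some b \<longrightarrow> i \<in> P" using P'(2) unfolding P_def D'_def by auto
        fix x assume x: "x \<noteq> b"
        show "cnt P \<psi> x \<le> cnt P \<phi> x" "cnt P \<phi> x \<le> cnt P \<psi> x + (cnt D \<phi> x - cnt D \<psi> x)"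
          using P'(3)[rule_format, OF x] x by (simp_all add: splitP splitD None e(2))
      qed
    next
      case (Some a1)
      have a1b: "a1 \<noteq> b" using less.prems(2) e(1) Some by auto
      show ?thesis
      proof (cases "\<exists>f\<in>D. \<psi> f = Some a1")
        case True
        then obtain f where f: "f \<in> D" "\<psi> f = Some a1" by blast
        have fe: "f \<noteq> e" using f e a1b by auto
        define \<psi>' where "\<psi>' = \<psi>(f := Some b)"
        obtain P' where P': "P' \<subseteq> D'" "\<forall>i\<in>D'. \<psi>' i = Some b \<longrightarrow> i \<in> P'"
          "\<forall>x. x \<noteq> b \<longrightarrow> cnt P' \<psi>' x \<le> cnt P' \<phi> x \<and> cnt P' \<phi> x \<le> cnt P' \<psi>' x + (cnt D' \<phi> x - cnt D' \<psi>' x)"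
          using less.hyps[of D' \<psi>'] cD' fD' phiD' by blast
        have fD'': "f \<in> D'" using f fe unfolding D'_def by auto
        have fP'mem: "f \<in> P'" using P'(2) fD'' unfolding \<psi>'_def by simp
        define P where "P = insert e P'"
        have eP': "e \<notin> P'" using P'(1) unfolding D'_def by auto
        have fP': "finite P'" using P'(1) fD' finite_subset by blast
        have splitP: "\<And>f x. cnt P f x = cnt P' f x + (if f e = Some x then 1 else 0)"
          unfolding P_def by (rule cnt_insert[OF fP' eP'])
        have sw: "\<And>Q x. finite Q \<Longrightarrow> f \<in> Q \<Longrightarrow> x \<noteq> b \<Longrightarrow> cnt Q \<psi> x = cnt Q \<psi>' x + (if x = a1 then 1 else 0)"
        proof -
          fix Q x assume Q: "finite Q" "f \<in> Q" and x: "x \<noteq> b"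
          have "cnt Q \<psi> x = cnt (Q-{f}) \<psi> x + (if \<psi> f = Some x then 1 else 0)" by (rule cnt_split[OF Q])
          moreover have "cnt Q \<psi>' x = cnt (Q-{f}) \<psi>' x + (if \<psi>' f = Some x then 1 else 0)" by (rule cnt_split[OF Q])
          moreover have "cnt (Q-{f}) \<psi>' x = cnt (Q-{f}) \<psi> x" by (rule cnt_cong) (simp add: \<psi>'_def)
          ultimately show "cnt Q \<psi> x = cnt Q \<psi>' x + (if x = a1 then 1 else 0)" using x f(2)
            by (auto simp: \<psi>'_def)
        qed
        show ?thesis
        proof (intro exI[of _ P] conjI allI impI)
          show "P \<subseteq> D" using P'(1) e(1) unfolding P_def D'_def by auto
          show "\<forall>i\<in>D. \<psi> i = Some b \<longrightarrow> i \<in> P"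
          proof (intro ballI impI)
            fix i assume i: "i \<in> D" "\<psi> i = Some b"
            show "i \<in> P"
            proof (cases "i = e")
              case False
              then have "i \<in> D'" "\<psi>' i = Some b" using i unfolding D'_def \<psi>'_def by auto
              then show ?thesis using P'(2) unfolding P_def by auto
            qed (simp add: P_def)
          qed
          fix x assume x: "x \<noteq> b"
          have s1: "cnt P' \<psi> x = cnt P' \<psi>' x + (if x = a1 then 1 else 0)" by (rule sw[OF fP' fP'mem x])
          have s2: "cnt D' \<psi> x = cnt D' \<psi>' x + (if x = a1 then 1 else 0)" by (rule sw[OF fD' fD'' x])
          show "cnt P \<psi> x \<le> cnt P \<phi> x" "cnt P \<phi> x \<le> cnt P \<psi> x + (cnt D \<phi> x - cnt D \<psi> x)"
            using P'(3)[rule_format, OF x] x s1 s2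
            by (cases "x = a1"; simp add: splitP splitD Some e(2))+
        qed
      next
        case False
        obtain P' where P': "P' \<subseteq> D'" "\<forall>i\<in>D'. \<psi> i = Some b \<longrightarrow> i \<in> P'"
          "\<forall>x. x \<noteq> b \<longrightarrow> cnt P' \<psi> x \<le> cnt P' \<phi> x \<and> cnt P' \<phi> x \<le> cnt P' \<psi> x + (cnt D' \<phi> x - cnt D' \<psi> x)"
          using less.hyps[of D' \<psi>] cD' fD' phiD' by blast
        define P where "P = insert e P'"
        have eP': "e \<notin> P'" using P'(1) unfolding D'_def by auto
        have fP': "finite P'" using P'(1) fD' finite_subset by blast
        have splitP: "\<And>f x. cnt P f x = cnt P' f x + (if f e = Some x then 1 else 0)"
          unfolding P_def by (rule cnt_insert[OF fP' eP'])
        have e1: "{i\<in>P'. \<psi> i = Some a1} = {}" "{i\<in>D'. \<psi> i = Some a1} = {}"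
          using False P'(1) unfolding D'_def by auto
        have z: "cnt P' \<psi> a1 = 0" "cnt D' \<psi> a1 = 0" unfolding cnt_def by (simp_all only: e1 card.empty)
        show ?thesis
        proof (intro exI[of _ P] conjI allI impI)
          show "P \<subseteq> D" using P'(1) e(1) unfolding P_def D'_def by auto
          show "\<forall>i\<in>D. \<psi> i = Some b \<longrightarrow> i \<in> P" using P'(2) unfolding P_def D'_def by auto
          fix x assume x: "x \<noteq> b"
          show "cnt P \<psi> x \<le> cnt P \<phi> x" "cnt P \<phi> x \<le> cnt P \<psi> x + (cnt D \<phi> x - cnt D \<psi> x)"
            using P'(3)[rule_format, OF x] x z
            by (cases "x = a1"; simp add: splitP splitD Some e(2))+
        qed
      qed
    qed
  qed
qed



definition upd :: "('v \<Rightarrow> 'b) \<Rightarrow> ('v \<Rightarrow> 'b) \<Rightarrow> 'v set \<Rightarrow> 'v \<Rightarrow> 'b" where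
  "upd F G P = (\<lambda>i. if i \<in> P then G i else F i)"

lemma cnt_diff:
  assumes "finite N" "P \<subseteq> N"
  shows "cnt (N - P) F x + cnt P F x = cnt N F x"
proof -
  have "{i\<in>N. F i = Some x} = {i\<in>N-P. F i = Some x} \<union> {i\<in>P. F i = Some x}" using assms(2) by auto
  moreover have "finite {i\<in>P. F i = Some x}" using finite_subset[OF assms(2) assms(1)] by simp
  ultimately show ?thesis unfolding cnt_def using assms(1)
    by (simp add: card_Un_disjoint[symmetric] disjoint_iff)
qed

lemma cnt_upd:
  assumes "finite N" "P \<subseteq> N"
  shows "cnt N (upd F G P) x = cnt P G x + cnt (N - P) F x"
proof -
  have "{i\<in>N. upd F G P i = Some x} = {i\<in>P. G i = Some x} \<union> {i\<in>N-P. F i = Some x}"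
    using assms(2) by (auto simp: upd_def)
  moreover have "finite {i\<in>P. G i = Some x}" using finite_subset[OF assms(2) assms(1)] by simp
  ultimately show ?thesis unfolding cnt_def using assms(1)
    by (simp add: card_Un_disjoint[symmetric] disjoint_iff)
qed

lemma cnt_sub: "finite N \<Longrightarrow> P \<subseteq> N \<Longrightarrow> cnt P F x \<le> cnt N F x"
  unfolding cnt_def by (rule card_mono) auto

lemma cnt_pos: "finite P \<Longrightarrow> i \<in> P \<Longrightarrow> G i = Some a \<Longrightarrow> 0 < cnt P G a"
  unfolding cnt_def by (subst card_gt_0_iff) auto

lemma pa_iff: "partial_assignment N S K \<Phi> \<longleftrightarrow> (\<forall>i\<in>N. \<Phi> i = None \<or> (\<exists>a\<in>S. \<Phi> i = Some a)) \<and>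
   (\<forall>a\<in>S. cnt N \<Phi> a \<le> capacity (card N) K)"
  by (simp add: partial_assignment_def cnt_def)

lemma cnt_zero: "\<forall>i\<in>N. \<Phi> i = None \<or> (\<exists>a\<in>S. \<Phi> i = Some a) \<Longrightarrow> x \<notin> S \<Longrightarrow> cnt N \<Phi> x = 0"
proof -
  assume a: "\<forall>i\<in>N. \<Phi> i = None \<or> (\<exists>a\<in>S. \<Phi> i = Some a)" "x \<notin> S"
  then have "{i\<in>N. \<Phi> i = Some x} = {}" by force
  then show ?thesis unfolding cnt_def by (simp only: card.empty)
qed

lemma pa_mono: "partial_assignment N S K \<Phi> \<Longrightarrow> S \<subseteq> S' \<Longrightarrow> partial_assignment N S' K \<Phi>"
proof -
  assume a: "partial_assignment N S K \<Phi>" "S \<subseteq> S'"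
  have v: "\<forall>i\<in>N. \<Phi> i = None \<or> (\<exists>a\<in>S. \<Phi> i = Some a)" and c: "\<forall>a\<in>S. cnt N \<Phi> a \<le> capacity (card N) K"
    using a(1) unfolding pa_iff by auto
  have "\<forall>i\<in>N. \<Phi> i = None \<or> (\<exists>a\<in>S'. \<Phi> i = Some a)" using v a(2) by blast
  moreover have "\<forall>a\<in>S'. cnt N \<Phi> a \<le> capacity (card N) K"
  proof
    fix a assume "a \<in> S'"
    show "cnt N \<Phi> a \<le> capacity (card N) K"
      using c cnt_zero[OF v, of a] by (cases "a \<in> S") auto
  qed
  ultimately show ?thesis unfolding pa_iff by blast
qed

lemma step:
  assumes fin: "finite N" and PhiS: "partial_assignment N S K \<Phi>" and PsiT: "partial_assignment N T K \<Psi>"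
    and bT: "b \<in> T" and bS: "b \<notin> S"
  shows "\<exists>P\<subseteq>N. partial_assignment N (insert b S) K (upd \<Phi> \<Psi> P) \<and>
      partial_assignment N (S \<union> (T - {b})) K (upd \<Psi> \<Phi> P)"
proof -
  define c where "c = capacity (card N) K"
  have v1: "\<forall>i\<in>N. \<Phi> i = None \<or> (\<exists>a\<in>S. \<Phi> i = Some a)" and c1: "\<forall>a\<in>S. cnt N \<Phi> a \<le> c"
    using PhiS unfolding pa_iff c_def by auto
  have v2: "\<forall>i\<in>N. \<Psi> i = None \<or> (\<exists>a\<in>T. \<Psi> i = Some a)" and c2: "\<forall>a\<in>T. cnt N \<Psi> a \<le> c"
    using PsiT unfolding pa_iff c_def by auto
  have nb: "\<forall>i\<in>N. \<Phi> i \<noteq> Some b" using v1 bS by force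
  obtain P where P: "P \<subseteq> N" "\<forall>i\<in>N. \<Psi> i = Some b \<longrightarrow> i \<in> P"
    "\<forall>x. x \<noteq> b \<longrightarrow> cnt P \<Psi> x \<le> cnt P \<Phi> x \<and> cnt P \<Phi> x \<le> cnt P \<Psi> x + (cnt N \<Phi> x - cnt N \<Psi> x)"
    using decomp[OF fin nb, of \<Psi>] by blast
  have z1: "\<And>x. x \<notin> S \<Longrightarrow> cnt N \<Phi> x = 0" using cnt_zero[OF v1] .
  have z2: "\<And>x. x \<notin> T \<Longrightarrow> cnt N \<Psi> x = 0" using cnt_zero[OF v2] .
  have fP: "finite P" using P(1) fin finite_subset by blast
  have sub: "\<And>F x. cnt P F x \<le> cnt N F x" using cnt_sub[OF fin P(1)] .
  have dif: "\<And>F x. cnt (N - P) F x + cnt P F x = cnt N F x" using cnt_diff[OF fin P(1)] .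
  have up: "\<And>F G x. cnt N (upd F G P) x = cnt P G x + cnt (N - P) F x" using cnt_upd[OF fin P(1)] .
  have A1: "partial_assignment N (insert b S) K (upd \<Phi> \<Psi> P)"
    unfolding pa_iff c_def[symmetric]
  proof (intro conjI ballI)
    fix i assume i: "i \<in> N"
    show "upd \<Phi> \<Psi> P i = None \<or> (\<exists>a\<in>insert b S. upd \<Phi> \<Psi> P i = Some a)"
    proof (cases "i \<in> P")
      case True
      show ?thesis
      proof (cases "\<Psi> i")
        case (Some a)
        have "a \<in> insert b S"
        proof (rule ccontr)
          assume "a \<notin> insert b S"
          then have "a \<noteq> b" "cnt N \<Phi> a = 0" using z1 by auto
          then have "cnt P \<Psi> a \<le> cnt P \<Phi> a" "cnt P \<Phi> a \<le> cnt N \<Phi> a" using P(3) sub[of \<Phi> a] by blast+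
          then have "cnt P \<Psi> a = 0" using \<open>cnt N \<Phi> a = 0\<close> by linarith
          moreover have "0 < cnt P \<Psi> a" using cnt_pos[of P i \<Psi> a, OF fP True Some] .
          ultimately show False by simp
        qed
        then show ?thesis using True Some by (auto simp: upd_def)
      qed (simp add: upd_def True)
    next
      case False
      then show ?thesis using v1 i by (auto simp: upd_def)
    qed
  next
    fix a assume a: "a \<in> insert b S"
    show "cnt N (upd \<Phi> \<Psi> P) a \<le> c"
    proof (cases "a = b")
      case True
      have "cnt (N - P) \<Phi> b = 0" using dif[of \<Phi> b] z1[OF bS] by simp
      moreover have "cnt P \<Psi> b \<le> c" using sub[of \<Psi> b] c2 bT by fastforce
      moreover have "cnt N (upd \<Phi> \<Psi> P) b = cnt P \<Psi> b + cnt (N - P) \<Phi> b" by (rule up)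
      ultimately show ?thesis using True by simp
    next
      case False
      then have "a \<in> S" using a by auto
      have "cnt P \<Psi> a \<le> cnt P \<Phi> a" using P(3) False by blast
      moreover have "cnt N (upd \<Phi> \<Psi> P) a = cnt P \<Psi> a + cnt (N - P) \<Phi> a" by (rule up)
      moreover have "cnt (N - P) \<Phi> a + cnt P \<Phi> a = cnt N \<Phi> a" by (rule dif)
      moreover have "cnt N \<Phi> a \<le> c" using c1 \<open>a \<in> S\<close> by blast
      ultimately show ?thesis by linarith
    qed
  qed
  have A2: "partial_assignment N (S \<union> (T - {b})) K (upd \<Psi> \<Phi> P)"
    unfolding pa_iff c_def[symmetric]
  proof (intro conjI ballI)
    fix i assume i: "i \<in> N"
    show "upd \<Psi> \<Phi> P i = None \<or> (\<exists>a\<in>S \<union> (T - {b}). upd \<Psi> \<Phi> P i = Some a)"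
    proof (cases "i \<in> P")
      case True
      then show ?thesis using v1 i by (auto simp: upd_def)
    next
      case False
      then have "\<Psi> i \<noteq> Some b" using P(2) i by auto
      then show ?thesis using v2 i False by (auto simp: upd_def)
    qed
  next
    fix a assume a: "a \<in> S \<union> (T - {b})"
    then have ab: "a \<noteq> b" using bS by auto
    have e1: "cnt N (upd \<Psi> \<Phi> P) a = cnt P \<Phi> a + cnt (N - P) \<Psi> a" by (rule up)
    have e2: "cnt (N - P) \<Psi> a + cnt P \<Psi> a = cnt N \<Psi> a" by (rule dif)
    have e3: "cnt P \<Phi> a \<le> cnt P \<Psi> a + (cnt N \<Phi> a - cnt N \<Psi> a)" using P(3) ab by blast
    have e4: "cnt N \<Phi> a \<le> c" using c1 z1 by (cases "a \<in> S") auto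
    have e5: "cnt N \<Psi> a \<le> c" using c2 z2 by (cases "a \<in> T") auto
    show "cnt N (upd \<Psi> \<Phi> P) a \<le> c"
    proof (cases "cnt N \<Phi> a \<le> cnt N \<Psi> a")
      case True
      then have "cnt P \<Phi> a \<le> cnt P \<Psi> a" using e3 by simp
      then show ?thesis using e1 e2 e5 by linarith
    next
      case False
      then have "cnt P \<Phi> a + cnt N \<Psi> a \<le> cnt P \<Psi> a + cnt N \<Phi> a" using e3 by simp
      then show ?thesis using e1 e2 e4 by linarith
    qed
  qed
  show ?thesis using A1 A2 P(1) by blast
qed

lemma ell_upd: "ell1 N \<alpha> m pos (upd \<Phi> \<Psi> P) + ell1 N \<alpha> m pos (upd \<Psi> \<Phi> P) = ell1 N \<alpha> m pos \<Phi> + ell1 N \<alpha> m pos \<Psi>"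
  unfolding ell1_def sum.distrib[symmetric] by (intro sum.cong) (auto simp: upd_def)

lemma claim:
  assumes fin: "finite N" and opt: "optimal_partial N A pos \<alpha> K S \<Phi>" and finB: "finite B"
    and G: "\<forall>b\<in>B. \<forall>\<Psi>. partial_assignment N (insert b S) K \<Psi> \<longrightarrow> ell1 N \<alpha> (card A) pos \<Psi> \<le> G b"
  shows "\<forall>\<Psi>. partial_assignment N (S \<union> B) K \<Psi> \<longrightarrow>
     ell1 N \<alpha> (card A) pos \<Psi> + card B * ell1 N \<alpha> (card A) pos \<Phi> \<le> ell1 N \<alpha> (card A) pos \<Phi> + sum G B"
  using finB G
proof (induction B rule: finite_induct)
  case empty
  then show ?case using opt unfolding optimal_partial_def by simp
next
  case (insert b B)
  let ?e = "ell1 N \<alpha> (card A) pos"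
  have IH: "\<forall>\<Psi>. partial_assignment N (S \<union> B) K \<Psi> \<longrightarrow> ?e \<Psi> + card B * ?e \<Phi> \<le> ?e \<Phi> + sum G B"
    using insert by blast
  have PhiS: "partial_assignment N S K \<Phi>" using opt unfolding optimal_partial_def by blast
  have Gb: "\<forall>\<Psi>. partial_assignment N (insert b S) K \<Psi> \<longrightarrow> ?e \<Psi> \<le> G b" using insert.prems by blast
  show ?case
  proof (intro allI impI)
    fix \<Psi> assume Psi: "partial_assignment N (S \<union> insert b B) K \<Psi>"
    show "?e \<Psi> + card (insert b B) * ?e \<Phi> \<le> ?e \<Phi> + sum G (insert b B)"
    proof (cases "b \<in> S")
      case True
      then have "S \<union> insert b B = S \<union> B" "insert b S = S" by auto
      then have "?e \<Psi> + card B * ?e \<Phi> \<le> ?e \<Phi> + sum G B" "?e \<Phi> \<le> G b"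
        using IH Psi Gb PhiS by auto
      then show ?thesis using insert.hyps by simp
    next
      case False
      obtain P where P: "partial_assignment N (insert b S) K (upd \<Phi> \<Psi> P)"
        "partial_assignment N (S \<union> ((S \<union> insert b B) - {b})) K (upd \<Psi> \<Phi> P)"
        using step[OF fin PhiS Psi _ False] by blast
      have "S \<union> ((S \<union> insert b B) - {b}) = S \<union> B" using False insert.hyps by auto
      then have "?e (upd \<Psi> \<Phi> P) + card B * ?e \<Phi> \<le> ?e \<Phi> + sum G B" using IH P(2) by auto
      moreover have "?e (upd \<Phi> \<Psi> P) \<le> G b" using Gb P(1) by blast
      moreover have "?e (upd \<Phi> \<Psi> P) + ?e (upd \<Psi> \<Phi> P) = ?e \<Phi> + ?e \<Psi>" by (rule ell_upd)
      ultimately show ?thesis using insert.hyps by simp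
    qed
  qed
qed



lemma fill:
  assumes fin: "finite N" and finS: "finite S" and cap: "card N \<le> card S * capacity (card N) K"
  shows "partial_assignment N S K \<Phi> \<Longrightarrow> \<exists>\<Psi>. (\<forall>i\<in>N. \<Psi> i \<in> S) \<and>
     (\<forall>a\<in>S. card {i\<in>N. \<Psi> i = a} \<le> capacity (card N) K) \<and> (\<forall>i\<in>N. \<Phi> i \<noteq> None \<longrightarrow> \<Phi> i = Some (\<Psi> i))"
proof (induction "card {i\<in>N. \<Phi> i = None}" arbitrary: \<Phi> rule: less_induct)
  case less
  define c where "c = capacity (card N) K"
  have v: "\<forall>i\<in>N. \<Phi> i = None \<or> (\<exists>a\<in>S. \<Phi> i = Some a)" and cc: "\<forall>a\<in>S. cnt N \<Phi> a \<le> c"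
    using less.prems unfolding pa_iff c_def by auto
  show ?case
  proof (cases "\<exists>i0\<in>N. \<Phi> i0 = None")
    case False
    define \<Psi> where "\<Psi> = (\<lambda>i. the (\<Phi> i))"
    have Phii: "\<forall>i\<in>N. \<Phi> i = Some (\<Psi> i)" using False by (auto simp: \<Psi>_def)
    show ?thesis
    proof (intro exI[of _ \<Psi>] conjI ballI impI)
      fix i assume i: "i \<in> N"
      show "\<Psi> i \<in> S" using v i Phii by force
      show "\<Phi> i = Some (\<Psi> i)" using Phii i by blast
    next
      fix a assume a: "a \<in> S"
      have "{i\<in>N. \<Psi> i = a} = {i\<in>N. \<Phi> i = Some a}" using Phii by auto
      then show "card {i\<in>N. \<Psi> i = a} \<le> capacity (card N) K" using cc a unfolding cnt_def c_def by simp
    qed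
  next
    case True
    then obtain i0 where i0: "i0 \<in> N" "\<Phi> i0 = None" by blast
    have "\<exists>a\<in>S. cnt N \<Phi> a < c"
    proof (rule ccontr)
      assume "\<not> (\<exists>a\<in>S. cnt N \<Phi> a < c)"
      then have ge: "\<forall>a\<in>S. c \<le> cnt N \<Phi> a" by auto
      have U: "{i\<in>N. \<Phi> i \<noteq> None} = (\<Union>a\<in>S. {i\<in>N. \<Phi> i = Some a})" using v by auto
      have "card {i\<in>N. \<Phi> i \<noteq> None} = (\<Sum>a\<in>S. cnt N \<Phi> a)" unfolding U cnt_def
        by (rule card_UN_disjoint) (use fin finS in auto)
      moreover have "card {i\<in>N. \<Phi> i \<noteq> None} < card N"
      proof (rule psubset_card_mono)
        show "{i\<in>N. \<Phi> i \<noteq> None} \<subset> N" using i0 by blast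
      qed (rule fin)
      moreover have "(\<Sum>a\<in>S. c) \<le> (\<Sum>a\<in>S. cnt N \<Phi> a)" by (rule sum_mono) (use ge in auto)
      ultimately show False using cap unfolding c_def by (simp add: mult.commute)
    qed
    then obtain a where a: "a \<in> S" "cnt N \<Phi> a < c" by blast
    define \<Phi>' where "\<Phi>' = \<Phi>(i0 := Some a)"
    have cnt': "\<And>x. cnt N \<Phi>' x = cnt N \<Phi> x + (if x = a then 1 else 0)"
    proof -
      fix x
      have "cnt N \<Phi>' x = cnt (N - {i0}) \<Phi>' x + (if \<Phi>' i0 = Some x then 1 else 0)" by (rule cnt_split[OF fin i0(1)])
      moreover have "cnt N \<Phi> x = cnt (N - {i0}) \<Phi> x + (if \<Phi> i0 = Some x then 1 else 0)" by (rule cnt_split[OF fin i0(1)])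
      moreover have "cnt (N - {i0}) \<Phi>' x = cnt (N - {i0}) \<Phi> x" by (rule cnt_cong) (simp add: \<Phi>'_def)
      ultimately show "cnt N \<Phi>' x = cnt N \<Phi> x + (if x = a then 1 else 0)" using i0(2) by (auto simp: \<Phi>'_def)
    qed
    have pa': "partial_assignment N S K \<Phi>'"
      unfolding pa_iff
    proof (intro conjI ballI)
      fix i assume "i \<in> N"
      then show "\<Phi>' i = None \<or> (\<exists>a\<in>S. \<Phi>' i = Some a)" using v a(1) by (auto simp: \<Phi>'_def)
    next
      fix x assume "x \<in> S"
      then show "cnt N \<Phi>' x \<le> capacity (card N) K" using cnt'[of x] cc a(2) unfolding c_def[symmetric]
        by (cases "x = a") auto
    qed
    have eqN: "{i\<in>N. \<Phi>' i = None} = {i\<in>N. \<Phi> i = None} - {i0}" by (auto simp: \<Phi>'_def)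
    have lt: "card {i\<in>N. \<Phi>' i = None} < card {i\<in>N. \<Phi> i = None}"
      unfolding eqN by (rule card_Diff1_less) (use fin i0 in auto)
    obtain \<Psi> where Psi: "\<forall>i\<in>N. \<Psi> i \<in> S" "\<forall>a\<in>S. card {i\<in>N. \<Psi> i = a} \<le> capacity (card N) K"
      "\<forall>i\<in>N. \<Phi>' i \<noteq> None \<longrightarrow> \<Phi>' i = Some (\<Psi> i)"
      using less.hyps[OF lt pa'] by blast
    show ?thesis
    proof (intro exI[of _ \<Psi>] conjI)
      show "\<forall>i\<in>N. \<Phi> i \<noteq> None \<longrightarrow> \<Phi> i = Some (\<Psi> i)"
      proof (intro ballI impI)
        fix i assume "i \<in> N" "\<Phi> i \<noteq> None"
        then have "i \<noteq> i0" "\<Phi>' i = \<Phi> i" using i0 by (auto simp: \<Phi>'_def)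
        then show "\<Phi> i = Some (\<Psi> i)" using Psi(3) \<open>i \<in> N\<close> \<open>\<Phi> i \<noteq> None\<close> by auto
      qed
    qed (use Psi in auto)
  qed
qed



theorem mainTheorem12:
  fixes N :: "'v set" and A :: "'a set" and pos :: "'v \<Rightarrow> 'a \<Rightarrow> nat"
    and \<alpha> :: "nat \<Rightarrow> nat" and K :: nat and xs :: "'a list" and \<Phi> :: "'v \<Rightarrow> 'a option"
  assumes prof: "valid_profile N A pos"
    and mono: "\<And>j k. 1 \<le> j \<Longrightarrow> j \<le> k \<Longrightarrow> k \<le> card A \<Longrightarrow> \<alpha> k \<le> \<alpha> j"
    and K: "1 \<le> K" "K \<le> card A"
    and run: "gm_run N A pos \<alpha> K xs \<Phi>"
  shows "(\<exists>\<Psi>. monroe_assignment N A K \<Psi> \<and> (\<forall>i\<in>N. \<Phi> i \<noteq> None \<longrightarrow> \<Phi> i = Some (\<Psi> i)))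
    \<and> (\<forall>\<Psi>. monroe_assignment N A K \<Psi> \<longrightarrow>
          real (ell1 N \<alpha> (card A) pos \<Phi>)
            \<ge> (1 - 1 / exp 1) * real (ell1 N \<alpha> (card A) pos (\<lambda>i. Some (\<Psi> i))))"
proof -
  let ?e = "ell1 N \<alpha> (card A) pos"
  define c where "c = capacity (card N) K"
  have finN: "finite N" and finA: "finite A" using prof unfolding valid_profile_def by auto
  have len: "length xs = K" and gr: "\<forall>j<K. greedy_choice N A pos \<alpha> K (set (take j xs)) (xs ! j)"
    and optPhi: "optimal_partial N A pos \<alpha> K (set xs) \<Phi>" using run unfolding gm_run_def by auto
  define S where "S j = set (take j xs)" for j
  have Ssuc: "\<And>j. j < K \<Longrightarrow> S (Suc j) = insert (xs!j) (S j)"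
    using len by (simp add: S_def take_Suc_conv_app_nth)
  have xnot: "\<And>j. j < K \<Longrightarrow> xs!j \<in> A \<and> xs!j \<notin> S j"
  proof -
    fix j assume "j < K"
    then have "greedy_choice N A pos \<alpha> K (set (take j xs)) (xs ! j)" using gr by blast
    then have "xs!j \<in> A - set (take j xs)" unfolding greedy_choice_def by blast
    then show "xs!j \<in> A \<and> xs!j \<notin> S j" unfolding S_def by blast
  qed
  have SK: "S K = set xs" using len by (simp add: S_def)
  have xsA: "set xs \<subseteq> A"
  proof
    fix x assume "x \<in> set xs"
    then obtain j where "j < length xs" "xs ! j = x" by (auto simp: in_set_conv_nth)
    then show "x \<in> A" using xnot len by auto
  qed
  have SA: "\<And>j. S j \<subseteq> A" unfolding S_def by (rule subset_trans[OF set_take_subset xsA])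
  have cardS: "\<And>j. j \<le> K \<Longrightarrow> card (S j) = j"
  proof -
    fix j show "j \<le> K \<Longrightarrow> card (S j) = j"
    proof (induction j)
      case 0 then show ?case by (simp add: S_def)
    next
      case (Suc j)
      then have "j < K" by simp
      then show ?case using Ssuc[of j] xnot[of j] Suc by (simp add: S_def)
    qed
  qed
  have "\<forall>j. \<exists>F. j < K \<longrightarrow> optimal_partial N A pos \<alpha> K (S (Suc j)) F \<and>
     (\<forall>b\<in>A - S j. \<forall>\<Psi>. partial_assignment N (insert b (S j)) K \<Psi> \<longrightarrow> ?e \<Psi> \<le> ?e F)"
  proof
    fix j
    show "\<exists>F. j < K \<longrightarrow> optimal_partial N A pos \<alpha> K (S (Suc j)) F \<and>
     (\<forall>b\<in>A - S j. \<forall>\<Psi>. partial_assignment N (insert b (S j)) K \<Psi> \<longrightarrow> ?e \<Psi> \<le> ?e F)"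
    proof (cases "j < K")
      case True
      then obtain F where F: "optimal_partial N A pos \<alpha> K (S j \<union> {xs!j}) F"
        "\<forall>b\<in>A - S j. \<forall>\<Psi>. partial_assignment N (S j \<union> {b}) K \<Psi> \<longrightarrow> ?e \<Psi> \<le> ?e F"
        using gr True unfolding greedy_choice_def S_def by blast
      have "S j \<union> {xs!j} = S (Suc j)" using Ssuc[OF True] by auto
      then show ?thesis using F by (intro exI[of _ F]) auto
    qed simp
  qed
  from choice[OF this] obtain Fs where Fs: "\<forall>j. j < K \<longrightarrow> optimal_partial N A pos \<alpha> K (S (Suc j)) (Fs j) \<and>
     (\<forall>b\<in>A - S j. \<forall>\<Psi>. partial_assignment N (insert b (S j)) K \<Psi> \<longrightarrow> ?e \<Psi> \<le> ?e (Fs j))" by blast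
  define Ph where "Ph j = (if j = 0 then (\<lambda>_::'v. None::'a option) else Fs (j - 1))" for j
  have opt0: "optimal_partial N A pos \<alpha> K (S 0) (Ph 0)"
    unfolding optimal_partial_def
  proof (intro conjI allI impI)
    show "partial_assignment N (S 0) K (Ph 0)" by (simp add: pa_iff Ph_def S_def)
    fix \<Psi> assume "partial_assignment N (S 0) K \<Psi>"
    then have "\<forall>i\<in>N. \<Psi> i = None" by (simp add: pa_iff S_def)
    then have "?e \<Psi> = ?e (Ph 0)" unfolding ell1_def Ph_def by (intro sum.cong) auto
    then show "?e \<Psi> \<le> ?e (Ph 0)" by simp
  qed
  have optj: "\<And>j. j \<le> K \<Longrightarrow> optimal_partial N A pos \<alpha> K (S j) (Ph j)"
  proof -
    fix j assume j: "j \<le> K"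
    show "optimal_partial N A pos \<alpha> K (S j) (Ph j)"
    proof (cases j)
      case 0 then show ?thesis using opt0 by simp
    next
      case (Suc j') then show ?thesis using Fs j by (simp add: Ph_def)
    qed
  qed
  have grb: "\<And>j b \<Psi>. j < K \<Longrightarrow> b \<in> A - S j \<Longrightarrow> partial_assignment N (insert b (S j)) K \<Psi> \<Longrightarrow>
      ?e \<Psi> \<le> ?e (Ph (Suc j))"
    using Fs by (simp add: Ph_def)
  have monv: "\<And>j. j < K \<Longrightarrow> ?e (Ph j) \<le> ?e (Ph (Suc j))"
  proof -
    fix j assume j: "j < K"
    have "partial_assignment N (S j) K (Ph j)" using optj[of j] j unfolding optimal_partial_def by simp
    then have "partial_assignment N (S (Suc j)) K (Ph j)" using pa_mono Ssuc[OF j] by blast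
    then show "?e (Ph j) \<le> ?e (Ph (Suc j))" using optj[of "Suc j"] j unfolding optimal_partial_def by simp
  qed
  have final: "?e \<Phi> = ?e (Ph K)"
    using optj[of K] optPhi SK unfolding optimal_partial_def by (simp add: antisym)
  have Kpos: "0 < K" using K by simp
  have capK: "card N \<le> K * c"
  proof -
    have "real (card N) / real K \<le> of_int \<lceil>real (card N) / real K\<rceil>" by (rule le_of_int_ceiling)
    also have "\<dots> = real c" unfolding c_def capacity_def by simp
    finally have "real (card N) \<le> real K * real c" using Kpos by (simp add: divide_le_eq mult.commute)
    then show ?thesis by (simp only: of_nat_mult[symmetric] of_nat_le_iff)
  qed
  have part1: "\<exists>\<Psi>. monroe_assignment N A K \<Psi> \<and> (\<forall>i\<in>N. \<Phi> i \<noteq> None \<longrightarrow> \<Phi> i = Some (\<Psi> i))"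
  proof -
    have cxs: "card (set xs) = K" using cardS[of K] SK by simp
    have paPhi: "partial_assignment N (set xs) K \<Phi>" using optPhi unfolding optimal_partial_def by simp
    obtain \<Psi> where Psi: "\<forall>i\<in>N. \<Psi> i \<in> set xs" "\<forall>a\<in>set xs. card {i\<in>N. \<Psi> i = a} \<le> capacity (card N) K"
      "\<forall>i\<in>N. \<Phi> i \<noteq> None \<longrightarrow> \<Phi> i = Some (\<Psi> i)"
      using fill[OF finN _ _ paPhi] capK cxs unfolding c_def by auto
    have "monroe_assignment N A K \<Psi>"
      unfolding monroe_assignment_def
    proof (intro conjI ballI)
      fix i assume "i \<in> N" then show "\<Psi> i \<in> A" using Psi(1) xsA by auto
    next
      have "card (\<Psi> ` N) \<le> card (set xs)" by (rule card_mono) (use Psi(1) in auto)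
      then show "card (\<Psi> ` N) \<le> K" using cxs by simp
    next
      fix a assume "a \<in> A"
      show "card {i\<in>N. \<Psi> i = a} \<le> capacity (card N) K"
      proof (cases "a \<in> set xs")
        case True then show ?thesis using Psi(2) by blast
      next
        case False
        then have "{i\<in>N. \<Psi> i = a} = {}" using Psi(1) by auto
        then have "card {i\<in>N. \<Psi> i = a} = 0" by (simp only: card.empty)
        then show ?thesis by simp
      qed
    qed
    then show ?thesis using Psi(3) by blast
  qed
  have part2: "\<forall>\<Psi>. monroe_assignment N A K \<Psi> \<longrightarrow> real (?e \<Phi>) \<ge> (1 - 1 / exp 1) * real (?e (\<lambda>i. Some (\<Psi> i)))"
  proof (intro allI impI)
    fix \<Psi>m assume M: "monroe_assignment N A K \<Psi>m"
    define X where "X = \<Psi>m ` N"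
    define OPT where "OPT = real (?e (\<lambda>i. Some (\<Psi>m i)))"
    define v where "v j = real (?e (Ph j))" for j
    have finX: "finite X" using finN by (simp add: X_def)
    have cX: "card X \<le> K" and XA: "X \<subseteq> A" and capM: "\<forall>a\<in>A. card {i\<in>N. \<Psi>m i = a} \<le> c"
      using M unfolding monroe_assignment_def X_def c_def by auto
    have paX: "partial_assignment N (S j \<union> X) K (\<lambda>i. Some (\<Psi>m i))" for j
      unfolding pa_iff
    proof (intro conjI ballI)
      fix i assume "i \<in> N" then show "Some (\<Psi>m i) = None \<or> (\<exists>a\<in>S j \<union> X. Some (\<Psi>m i) = Some a)"
        by (auto simp: X_def)
    next
      fix a assume "a \<in> S j \<union> X"
      then have "a \<in> A" using SA XA by blast
      then show "cnt N (\<lambda>i. Some (\<Psi>m i)) a \<le> capacity (card N) K" using capM unfolding cnt_def c_def by simp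
    qed
    have key: "\<And>j. j < K \<Longrightarrow> OPT - v j \<le> real K * (v (Suc j) - v j)"
    proof -
      fix j assume j: "j < K"
      have G: "\<forall>b\<in>X. \<forall>\<Psi>. partial_assignment N (insert b (S j)) K \<Psi> \<longrightarrow> ?e \<Psi> \<le> (\<lambda>_. ?e (Ph (Suc j))) b"
      proof (intro ballI allI impI)
        fix b \<Psi> assume b: "b \<in> X" and P: "partial_assignment N (insert b (S j)) K \<Psi>"
        show "?e \<Psi> \<le> ?e (Ph (Suc j))"
        proof (cases "b \<in> S j")
          case True
          then have "insert b (S j) = S j" by auto
          then have "?e \<Psi> \<le> ?e (Ph j)" using optj[of j] j P unfolding optimal_partial_def by simp
          then show ?thesis using monv[OF j] by simp
        next
          case False
          then show ?thesis using grb[OF j _ P] b XA by blast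
        qed
      qed
      have "?e (\<lambda>i. Some (\<Psi>m i)) + card X * ?e (Ph j) \<le> ?e (Ph j) + (\<Sum>b\<in>X. ?e (Ph (Suc j)))"
        using claim[OF finN optj[of j] finX G] j paX[of j] by simp
      then have "?e (\<lambda>i. Some (\<Psi>m i)) + card X * ?e (Ph j) \<le> ?e (Ph j) + card X * ?e (Ph (Suc j))" by simp
      then have "OPT + real (card X) * v j \<le> v j + real (card X) * v (Suc j)"
        unfolding OPT_def v_def by (simp only: of_nat_add[symmetric] of_nat_mult[symmetric] of_nat_le_iff)
      then have h1: "OPT - v j \<le> real (card X) * (v (Suc j) - v j)" by (simp add: algebra_simps)
      have "v j \<le> v (Suc j)" using monv[OF j] unfolding v_def by simp
      then have "real (card X) * (v (Suc j) - v j) \<le> real K * (v (Suc j) - v j)"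
        using cX by (intro mult_right_mono) auto
      then show "OPT - v j \<le> real K * (v (Suc j) - v j)" using h1 by linarith
    qed
    define q where "q = 1 - 1 / real K"
    have q0: "0 \<le> q" using K by (simp add: q_def)
    have stepd: "\<And>j. j < K \<Longrightarrow> OPT - v (Suc j) \<le> q * (OPT - v j)"
    proof -
      fix j assume j: "j < K"
      have "(OPT - v j) / real K \<le> v (Suc j) - v j"
        using key[OF j] Kpos by (simp add: pos_divide_le_eq mult.commute)
      then show "OPT - v (Suc j) \<le> q * (OPT - v j)" by (simp add: q_def algebra_simps)
    qed
    have ind: "\<And>j. j \<le> K \<Longrightarrow> OPT - v j \<le> q ^ j * (OPT - v 0)"
    proof -
      fix j show "j \<le> K \<Longrightarrow> OPT - v j \<le> q ^ j * (OPT - v 0)"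
      proof (induction j)
        case 0 then show ?case by simp
      next
        case (Suc j)
        then have "OPT - v j \<le> q ^ j * (OPT - v 0)" by simp
        then have "q * (OPT - v j) \<le> q * (q ^ j * (OPT - v 0))" using q0 by (rule mult_left_mono)
        then show ?case using stepd[of j] Suc.prems by simp
      qed
    qed
    have qK: "q ^ K \<le> exp (-1)"
    proof -
      have "q \<le> exp (-1 / real K)" using exp_ge_add_one_self[of "-1 / real K"] by (simp add: q_def)
      then have "q ^ K \<le> exp (-1 / real K) ^ K" using q0 by (rule power_mono)
      also have "\<dots> = exp (real K * (-1 / real K))" by (rule exp_of_nat_mult[symmetric])
      also have "\<dots> = exp (-1)" using Kpos by simp
      finally show ?thesis .
    qed
    have OPT0: "0 \<le> OPT" unfolding OPT_def by simp
    have v0: "0 \<le> v 0" unfolding v_def by simp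
    have "OPT - v K \<le> q ^ K * (OPT - v 0)" using ind by simp
    also have "\<dots> \<le> q ^ K * OPT" using v0 q0 by (intro mult_left_mono) auto
    also have "\<dots> \<le> exp (-1) * OPT" using qK OPT0 by (rule mult_right_mono)
    finally have "OPT - v K \<le> exp (-1) * OPT" .
    moreover have "v K = real (?e \<Phi>)" using final unfolding v_def by simp
    moreover have "exp (-1::real) = 1 / exp 1" by (simp add: exp_minus divide_inverse)
    ultimately show "real (?e \<Phi>) \<ge> (1 - 1 / exp 1) * real (?e (\<lambda>i. Some (\<Psi>m i)))"
      unfolding OPT_def by (simp add: algebra_simps)
  qed
  show ?thesis using part1 part2 by blast
qed


end
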